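(* Let $K$ be an algebraically closed field with $\operatorname{char}K=p>0$. Let $G$ be a finite subgroup of $SL_2(K)$ and $Q$ a $p$-Sylow subgroup of $G$. Assume $Q$ is normal in $G$, $Q$ is elementary abelian, and $G/Q$ is cyclic. Then there exist a positive integer $n$ with $p\nmid n$, a primitive $n$-th root of unity $\zeta_n\in K$, an $\mathbb{F}_p(\zeta_n^2)$-subspace $V\subseteq K$ of finite $\mathbb{F}_p$-dimension $r$, an element $b\in K$, and $g\in SL_2(K)$ such that $gGg^{-1}$ is the subgroup generated by the matrices $\begin{pmatrix}1&v\\0&1\end{pmatrix}$ ($v\in V$) together with $\begin{pmatrix}\zeta_n&b\\0&\zeta_n^{-1}\end{pmatrix}$; i.e. $G$ is conjugate to a group $G(n,p^r)$.
   Context: For $p\nmid n$, $s=[\mathbb{F}_p(\zeta_n^2):\mathbb{F}_p]$ and $s\mid r$, the group $G(n,p^r)$ is realized inside $SL_2(K)$ as the subgroup generated by $\begin{pmatrix}1&v\\0&1\end{pmatrix}$, $v\in V$, and $\begin{pmatrix}\zeta_n&a\\0&\zeta_n^{-1}\end{pmatrix}$, where $V\subseteq K$ is an $\mathbb{F}_p(\zeta_n^2)$-subspace with $\dim_{\mathbb{F}_p}V=r$ and $a\in K$ (with $a=0$ if $n\le 2$). *)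

theory Defs
  imports "HOL-Analysis.Analysis" "HOL-Algebra.Algebra" "HOL-Computational_Algebra.Polynomial"
begin

definition SL2 :: "('a::field ^ 2 ^ 2) monoid" where
  "SL2 = \<lparr>carrier = {A. det A = 1}, mult = (\<lambda>A B. A ** B), one = mat 1\<rparr>"

definition mat2 :: "'a::zero \<Rightarrow> 'a \<Rightarrow> 'a \<Rightarrow> 'a \<Rightarrow> 'a ^ 2 ^ 2" where
  "mat2 a b c d = vector [vector [a, b], vector [c, d]]"

definition sylow_subgroup :: "nat \<Rightarrow> ('a::field ^ 2 ^ 2) set \<Rightarrow> ('a ^ 2 ^ 2) set \<Rightarrow> bool" where
  "sylow_subgroup p Q G \<longleftrightarrow> Q \<subseteq> G \<and> subgroup Q SL2 \<and> card Q = p ^ multiplicity p (card G)"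

definition is_subfield :: "'a::field set \<Rightarrow> bool" where
  "is_subfield F \<longleftrightarrow> 0 \<in> F \<and> 1 \<in> F \<and> (\<forall>x\<in>F. \<forall>y\<in>F. x + y \<in> F \<and> x * y \<in> F)
     \<and> (\<forall>x\<in>F. - x \<in> F \<and> inverse x \<in> F)"

definition gen_subfield :: "'a::field set \<Rightarrow> 'a set" where
  "gen_subfield S = \<Inter>{F. is_subfield F \<and> S \<subseteq> F}"

definition is_subspace_over :: "'a::field set \<Rightarrow> 'a set \<Rightarrow> bool" where
  "is_subspace_over F V \<longleftrightarrow> 0 \<in> V \<and> (\<forall>x\<in>V. \<forall>y\<in>V. x + y \<in> V) \<and> (\<forall>c\<in>F. \<forall>v\<in>V. c * v \<in> V)"

end

theory Submission
  imports Defs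
begin
lemma mat2_nth [simp]:
  "mat2 a b c d $ 1 $ 1 = a" "mat2 a b c d $ 1 $ 2 = b"
  "mat2 a b c d $ 2 $ 1 = c" "mat2 a b c d $ 2 $ 2 = d"
  by (simp_all add: mat2_def)
lemma mat2_eta: "(A::'a::zero^2^2) = mat2 (A$1$1) (A$1$2) (A$2$1) (A$2$2)"
  by (simp add: vec_eq_iff forall_2)
lemma mat2_eq_iff: "mat2 a b c d = mat2 e f g h \<longleftrightarrow> a = e \<and> b = f \<and> c = g \<and> d = h"
  by (metis mat2_nth)
lemma mat2_mult: "mat2 a b c d ** mat2 e f g h = mat2 (a * e+b * g) (a * f+b * h) (c * e+d * g) (c * f+d * h)"
  by (simp add: vec_eq_iff forall_2 matrix_matrix_mult_def sum_2)
lemma mat2_det: "det (mat2 a b c d) = a * d - b * c"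
  by (simp add: det_2)
lemma mat2_one: "mat 1 = mat2 1 0 0 1"
  by (simp add: vec_eq_iff forall_2 mat_def)

lemma SL2_simps [simp]:
  "carrier SL2 = {A. det A = 1}" "A \<otimes>\<^bsub>SL2\<^esub> B = A ** B" "\<one>\<^bsub>SL2\<^esub> = mat 1"
  by (simp_all add: SL2_def)

lemma group_SL2: "group (SL2 :: ('a::field^2^2) monoid)"
proof (rule groupI)
  fix x :: "'a^2^2" assume "x \<in> carrier SL2"
  moreover obtain a b c d where x: "x = mat2 a b c d" by (metis mat2_eta)
  ultimately have d: "a * d - b * c = 1" by (simp add: mat2_det)
  show "\<exists>y\<in>carrier SL2. y \<otimes>\<^bsub>SL2\<^esub> x = \<one>\<^bsub>SL2\<^esub>"
    apply (rule bexI[of _ "mat2 d (-b) (-c) a"])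
    using d by (auto simp: x mat2_mult mat2_one mat2_det algebra_simps)
qed (auto simp: det_mul matrix_mul_assoc)

lemma inv_SL2:
  assumes "a * d - b * c = (1::'a::field)"
  shows "inv\<^bsub>SL2\<^esub> (mat2 a b c d) = mat2 d (-b) (-c) a"
  apply (rule group.inv_equality[OF group_SL2])
  using assms by (auto simp: mat2_mult mat2_one mat2_det algebra_simps)

lemma frob1:
  fixes a :: "'a::field"
  assumes "Factorial_Ring.prime CHAR('a)" "a ^ (CHAR('a) ^ e) = 1"
  shows "a = 1"
proof -
  have "a ^ (CHAR('a) ^ e) = (a - 1) ^ (CHAR('a) ^ e) + 1 ^ (CHAR('a) ^ e)"
    using freshmans_dream'[OF assms(1) refl, of "a - 1" 1 e] by simp
  then have "(a - 1) ^ (CHAR('a) ^ e) = 0" using assms by simp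
  then show ?thesis by simp
qed

lemma upper_pow:
  fixes A :: "'a::field^2^2"
  assumes "A$2$1 = 0"
  shows "(A [^]\<^bsub>SL2\<^esub> (k::nat))$2$1 = 0 \<and> (A [^]\<^bsub>SL2\<^esub> k)$1$1 = (A$1$1)^k"
proof (induction k)
  case 0
  then show ?case by (simp add: mat2_one)
next
  case (Suc k)
  have "A [^]\<^bsub>SL2\<^esub> Suc k = A [^]\<^bsub>SL2\<^esub> k ** A" by simp
  also have "\<dots> = mat2 ((A$1$1)^k) ((A [^]\<^bsub>SL2\<^esub> k)$1$2) 0 ((A [^]\<^bsub>SL2\<^esub> k)$2$2)
       ** mat2 (A$1$1) (A$1$2) 0 (A$2$2)"
    using Suc assms by (metis mat2_eta)
  finally show ?case by (simp add: mat2_mult)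
qed

lemma partB:
  fixes H P :: "('a::field^2^2) set" and x :: "'a^2^2" and p :: nat
  assumes p: "Factorial_Ring.prime p" "CHAR('a) = p"
    and fin: "finite H" and sub: "subgroup H SL2"
    and up: "\<forall>h\<in>H. h$2$1 = 0" and xH: "x \<in> H" and PH: "P \<subseteq> H"
    and Pp: "\<forall>q\<in>P. q [^]\<^bsub>SL2\<^esub> p = \<one>\<^bsub>SL2\<^esub>"
    and dec: "\<forall>h\<in>H. \<exists>q\<in>P. \<exists>k::int. h = q \<otimes>\<^bsub>SL2\<^esub> x [^]\<^bsub>SL2\<^esub> k"
  shows "\<exists>(n::nat) (\<zeta>::'a) V (b::'a). n > 0 \<and> \<not> p dvd n \<and> \<zeta> ^ n = 1
     \<and> (\<forall>k. 0 < k \<and> k < n \<longrightarrow> \<zeta> ^ k \<noteq> 1)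
     \<and> is_subspace_over (gen_subfield {\<zeta>\<^sup>2}) V \<and> finite V
     \<and> H = generate SL2 ((\<lambda>v. mat2 1 v 0 1) ` V \<union> {mat2 \<zeta> b 0 (inverse \<zeta>)})"
proof -
  interpret G: group "SL2 :: ('a^2^2) monoid" by (rule group_SL2)
  have Hc: "H \<subseteq> carrier SL2" using sub by (rule subgroup.subset)
  define \<zeta> where "\<zeta> = x$1$1"
  define b where "b = x$1$2"
  have xdet: "det x = 1" using xH Hc by auto
  have x21: "x$2$1 = 0" using up xH by auto
  have xeq: "x = mat2 \<zeta> b 0 (x$2$2)" by (rule trans[OF mat2_eta]) (simp add: \<zeta>_def b_def x21)
  have z1: "\<zeta> * x$2$2 = 1" using xdet by (subst (asm) xeq) (simp add: mat2_det)
  hence z0: "\<zeta> \<noteq> 0" by auto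
  have x22: "x$2$2 = inverse \<zeta>" using z1 z0 by (simp add: field_simps)
  have xeq2: "x = mat2 \<zeta> b 0 (inverse \<zeta>)" using xeq x22 by simp
  have grpH: "group (SL2\<lparr>carrier := H\<rparr>)" by (rule G.subgroup_imp_group[OF sub])
  have "x [^]\<^bsub>SL2\<lparr>carrier := H\<rparr>\<^esub> order (SL2\<lparr>carrier := H\<rparr>) = \<one>\<^bsub>SL2\<lparr>carrier := H\<rparr>\<^esub>"
    by (rule group.pow_order_eq_1[OF grpH]) (simp add: xH)
  hence "x [^]\<^bsub>SL2\<^esub> card H = \<one>\<^bsub>SL2\<^esub>" by (simp add: nat_pow_def order_def)
  hence zH: "\<zeta> ^ card H = 1" using upper_pow[OF x21, of "card H"] by (simp add: \<zeta>_def mat2_one)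
  have "\<one>\<^bsub>SL2\<^esub> \<in> H" using sub by (rule subgroup.one_closed)
  hence "card H > 0" using fin by (auto simp: card_gt_0_iff)
  obtain m where m: "card H = p ^ multiplicity p (card H) * m" "\<not> p dvd m"
    by (rule multiplicity_decompose'[where x="card H" and p=p]) (use \<open>card H > 0\<close> p(1) in \<open>auto simp: prime_def\<close>)
  define e where "e = multiplicity p (card H)"
  have "(\<zeta> ^ m) ^ (CHAR('a) ^ e) = \<zeta> ^ card H"
    by (simp add: power_mult[symmetric] m(1)[folded e_def] mult.commute p(2))
  hence zm: "\<zeta> ^ m = 1" using frob1[of "\<zeta> ^ m" e] p zH by simp
  have m0: "m > 0" using m(1) \<open>card H > 0\<close> by (cases m) auto
  define n where "n = (LEAST k. 0 < k \<and> \<zeta> ^ k = 1)"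
  have n: "0 < n \<and> \<zeta> ^ n = 1" unfolding n_def by (rule LeastI[of _ m]) (simp add: m0 zm)
  have nmin: "\<forall>k. 0 < k \<and> k < n \<longrightarrow> \<zeta> ^ k \<noteq> 1" unfolding n_def using not_less_Least by blast
  have "\<zeta> ^ m = (\<zeta> ^ n) ^ (m div n) * \<zeta> ^ (m mod n)"
    by (simp add: power_mult[symmetric] power_add[symmetric])
  hence "\<zeta> ^ (m mod n) = 1" using zm n by simp
  hence "m mod n = 0" using nmin n mod_less_divisor[of n m] by auto
  hence "n dvd m" by auto
  hence ndvd: "\<not> p dvd n" using m(2) dvd_trans by blast
  define V where "V = {v. mat2 1 v 0 1 \<in> H}"
  have u_mult: "mat2 1 v 0 1 \<otimes>\<^bsub>SL2\<^esub> mat2 1 w 0 1 = mat2 1 (v+w) 0 1" for v w :: 'a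
    by (simp add: mat2_mult add.commute)
  have u_inv: "inv\<^bsub>SL2\<^esub> (mat2 1 v 0 1) = mat2 1 (-v) 0 1" for v :: 'a
    by (subst inv_SL2) auto
  have x_inv: "inv\<^bsub>SL2\<^esub> x = mat2 (inverse \<zeta>) (-b) 0 \<zeta>"
    unfolding xeq2 using z0 by (subst inv_SL2) auto
  have u_conj: "x \<otimes>\<^bsub>SL2\<^esub> mat2 1 v 0 1 \<otimes>\<^bsub>SL2\<^esub> inv\<^bsub>SL2\<^esub> x = mat2 1 (\<zeta>\<^sup>2 * v) 0 1" for v
    unfolding x_inv using z0 by (subst xeq2) (simp add: mat2_mult mat2_eq_iff field_simps power2_eq_square)
  have V0: "0 \<in> V" using \<open>\<one>\<^bsub>SL2\<^esub> \<in> H\<close> by (simp add: V_def mat2_one)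
  have Vadd: "v + w \<in> V" if "v \<in> V" "w \<in> V" for v w
    using subgroup.m_closed[OF sub, of "mat2 1 v 0 1" "mat2 1 w 0 1"] that u_mult[of v w]
    by (simp add: V_def)
  have Vneg: "- v \<in> V" if "v \<in> V" for v
    using subgroup.m_inv_closed[OF sub, of "mat2 1 v 0 1"] that u_inv[of v]
    by (simp add: V_def)
  have Vz: "\<zeta>\<^sup>2 * v \<in> V" if "v \<in> V" for v
  proof -
    have "x \<otimes>\<^bsub>SL2\<^esub> mat2 1 v 0 1 \<otimes>\<^bsub>SL2\<^esub> inv\<^bsub>SL2\<^esub> x \<in> H"
      using that xH sub by (simp add: V_def subgroup.m_closed subgroup.m_inv_closed del: SL2_simps)
    thus ?thesis unfolding u_conj V_def by simp
  qed
  have finV: "finite V"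
  proof -
    have "inj (\<lambda>v::'a. mat2 1 v 0 1)" by (auto intro: injI simp: mat2_eq_iff)
    hence "finite ((\<lambda>v::'a. mat2 1 v 0 1) -` H)" using fin by (rule finite_vimageI[rotated])
    thus ?thesis by (simp add: V_def vimage_def)
  qed
  define S where "S = {c. \<forall>v\<in>V. c * v \<in> V}"
  have "is_subfield S"
    unfolding is_subfield_def
  proof (intro conjI ballI)
    show "0 \<in> S" using V0 by (simp add: S_def)
    show "1 \<in> S" by (simp add: S_def)
    fix c d assume c: "c \<in> S"
    { assume "d \<in> S"
      thus "c + d \<in> S" "c * d \<in> S" using c Vadd by (auto simp: S_def distrib_right mult.assoc) }
    show "- c \<in> S" using c Vneg by (auto simp: S_def)
    show "inverse c \<in> S"
    proof (cases "c = 0")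
      case True thus ?thesis using \<open>0 \<in> S\<close> by simp
    next
      case False
      have "(\<lambda>v. c * v) ` V = V"
        by (rule endo_inj_surj[OF finV]) (use c False in \<open>auto simp: S_def inj_on_def\<close>)
      show ?thesis unfolding S_def
      proof (rule CollectI, intro ballI)
        fix v assume "v \<in> V"
        then obtain w where "w \<in> V" "v = c * w" using \<open>(\<lambda>v. c * v) ` V = V\<close> by blast
        thus "inverse c * v \<in> V" using False by (simp add: mult.assoc[symmetric])
      qed
    qed
  qed
  moreover have "\<zeta>\<^sup>2 \<in> S" using Vz by (simp add: S_def)
  ultimately have genS: "gen_subfield {\<zeta>\<^sup>2} \<subseteq> S" unfolding gen_subfield_def by blast
  have subsp: "is_subspace_over (gen_subfield {\<zeta>\<^sup>2}) V"
    unfolding is_subspace_over_def using V0 Vadd genS by (auto simp: S_def)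
  let ?S = "(\<lambda>v. mat2 1 v 0 1) ` V \<union> {mat2 \<zeta> b 0 (inverse \<zeta>)}"
  have SH: "?S \<subseteq> H" using xH xeq2 by (auto simp: V_def)
  hence "generate SL2 ?S \<subseteq> H" by (rule G.generate_subgroup_incl[OF _ sub])
  moreover have "H \<subseteq> generate SL2 ?S"
  proof
    fix h assume "h \<in> H"
    then obtain q k where q: "q \<in> P" and hq: "h = q \<otimes>\<^bsub>SL2\<^esub> x [^]\<^bsub>SL2\<^esub> (k::int)" using dec by blast
    have qH: "q \<in> H" using q PH by auto
    have q21: "q$2$1 = 0" using up qH by auto
    have "(q$1$1) ^ (CHAR('a) ^ 1) = 1" using upper_pow[OF q21, of p] Pp q p(2)
      by (simp add: mat2_one)
    hence q11: "q$1$1 = 1" using frob1[of "q$1$1" 1] p by simp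
    have "det q = 1" using qH Hc by auto
    hence q22: "q$2$2 = 1" using q11 q21 by (simp add: det_2)
    have "q = mat2 1 (q$1$2) 0 1" by (rule trans[OF mat2_eta]) (simp add: q11 q21 q22)
    hence "q \<in> ?S" using qH V_def by auto
    have gsub: "subgroup (generate SL2 ?S) SL2"
      by (rule G.generate_is_subgroup) (use SH Hc in auto)
    have "x \<in> generate SL2 ?S" using xeq2 by (auto intro: generate.incl)
    hence "x [^]\<^bsub>SL2\<^esub> k \<in> generate SL2 ?S" by (rule G.subgroup_int_pow_closed[OF gsub])
    moreover have "q \<in> generate SL2 ?S" using \<open>q \<in> ?S\<close> by (rule generate.incl)
    ultimately show "h \<in> generate SL2 ?S" unfolding hq
      by (rule subgroup.m_closed[OF gsub, rotated])
  qed
  ultimately have "H = generate SL2 ?S" by blast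
  thus ?thesis using n nmin ndvd subsp finV by blast
qed

lemma (in group) conj_hom:
  assumes "g \<in> carrier G"
  shows "group_hom G G (\<lambda>h. g \<otimes> h \<otimes> inv g)"
proof -
  have "(\<lambda>h. g \<otimes> h \<otimes> inv g) \<in> hom G G"
  proof (rule homI)
    fix x y assume "x \<in> carrier G" "y \<in> carrier G"
    then show "g \<otimes> (x \<otimes> y) \<otimes> inv g = g \<otimes> x \<otimes> inv g \<otimes> (g \<otimes> y \<otimes> inv g)"
      using assms by (simp add: m_assoc[symmetric]) (simp add: m_assoc)
  qed (use assms in auto)
  thus ?thesis unfolding group_hom_def group_hom_axioms_def using is_group by simp
qed

lemma (in group) conj_one_iff:
  assumes "g \<in> carrier G" "q \<in> carrier G"
  shows "g \<otimes> q \<otimes> inv g = \<one> \<longleftrightarrow> q = \<one>"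
  using assms by (simp add: inv_solve_right')

lemma (in group) conj_comm:
  assumes "h \<in> carrier G" "q \<in> carrier G"
  shows "h \<otimes> q \<otimes> inv h \<otimes> h = h \<otimes> q"
  using assms by (simp add: m_assoc)

lemma triang:
  fixes A :: "'a::alg_closed_field^2^2"
  assumes "det A = 1"
  shows "\<exists>g\<in>carrier SL2. (g \<otimes>\<^bsub>SL2\<^esub> A \<otimes>\<^bsub>SL2\<^esub> inv\<^bsub>SL2\<^esub> g)$2$1 = 0"
proof -
  interpret G: group "SL2 :: ('a^2^2) monoid" by (rule group_SL2)
  obtain a b c d where A: "A = mat2 a b c d" by (metis mat2_eta)
  have det: "a * d - b * c = 1" using assms A by (simp add: mat2_det)
  show ?thesis
  proof (cases "c = 0")
    case True
    have "inv\<^bsub>SL2\<^esub> (mat2 1 0 0 (1::'a)) = mat2 1 0 0 1" by (subst inv_SL2) auto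
    thus ?thesis using True
      by (intro bexI[of _ "mat2 1 0 0 1"]) (auto simp: A mat2_det mat2_mult)
  next
    case False
    define f where "f = (\<lambda>k::nat. if k = 0 then 1 else if k = 1 then - (a + d) else (1::'a))"
    obtain l where "(\<Sum>k\<le>2. f k * l ^ k) = 0"
      using alg_closed[of 2 f] by (auto simp: f_def)
    hence root: "l * l - (a + d) * l + 1 = 0"
      by (simp add: f_def eval_nat_numeral power2_eq_square algebra_simps)
    define g where "g = mat2 0 (1 / c) (- c) (l - d)"
    have gdet: "0 * (l - d) - (1 / c) * (- c) = 1" using False by simp
    have gc: "g \<in> carrier SL2" using gdet by (simp add: g_def mat2_det)
    have ginv: "inv\<^bsub>SL2\<^esub> g = mat2 (l - d) (- (1 / c)) (- (- c)) 0"
      unfolding g_def by (rule inv_SL2[OF gdet])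
    have "(g \<otimes>\<^bsub>SL2\<^esub> A \<otimes>\<^bsub>SL2\<^esub> inv\<^bsub>SL2\<^esub> g)$2$1 = c * (l * l - (a + d) * l + (a * d - b * c))"
      unfolding ginv by (simp add: g_def A mat2_mult) (simp add: algebra_simps)
    also have "\<dots> = 0" using root det by simp
    finally show ?thesis using gc by blast
  qed
qed

lemma upper_subgroup: "subgroup {A::'a::field^2^2. det A = 1 \<and> A$2$1 = 0} SL2"
proof -
  interpret G: group "SL2 :: ('a^2^2) monoid" by (rule group_SL2)
  show ?thesis
  proof (rule G.subgroupI)
    show "{A::'a^2^2. det A = 1 \<and> A$2$1 = 0} \<noteq> {}" using mat2_one[where 'a='a]
      by (auto intro!: exI[of _ "mat 1"] simp: mat2_det)
  next
    fix A :: "'a^2^2" assume "A \<in> {A. det A = 1 \<and> A$2$1 = 0}"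
    moreover obtain a b c d where A: "A = mat2 a b c d" by (metis mat2_eta)
    ultimately have "a * d - b * c = 1" "c = 0" by (auto simp: mat2_det)
    thus "inv\<^bsub>SL2\<^esub> A \<in> {A. det A = 1 \<and> A$2$1 = 0}"
      by (simp add: A inv_SL2 mat2_det mult.commute)
  next
    fix A B :: "'a^2^2" assume "A \<in> {A. det A = 1 \<and> A$2$1 = 0}" "B \<in> {A. det A = 1 \<and> A$2$1 = 0}"
    moreover obtain a b c d where A: "A = mat2 a b c d" by (metis mat2_eta)
    moreover obtain a' b' c' d' where B: "B = mat2 a' b' c' d'" by (metis mat2_eta)
    ultimately have "det A = 1" "det B = 1" "A = mat2 a b 0 d" "B = mat2 a' b' 0 d'" by auto
    moreover have "det (A ** B) = det A * det B" by (rule det_mul)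
    ultimately show "A \<otimes>\<^bsub>SL2\<^esub> B \<in> {A. det A = 1 \<and> A$2$1 = 0}"
      by (simp add: mat2_mult)
  qed auto
qed

lemma key_matrix:
  fixes M Y :: "'a::field^2^2" and p :: nat
  assumes p: "Factorial_Ring.prime p" "CHAR('a) = p" and beta: "\<beta> \<noteq> 0"
    and comm: "M ** mat2 1 \<beta> 0 1 = mat2 1 \<beta> 0 1 ** M"
    and Mp: "M [^]\<^bsub>SL2\<^esub> p = \<one>\<^bsub>SL2\<^esub>"
    and MY: "M ** Y = Y ** mat2 1 \<beta> 0 1"
  shows "Y$2$1 = 0"
proof -
  obtain m1 m2 m3 m4 where M: "M = mat2 m1 m2 m3 m4" by (metis mat2_eta)
  obtain y1 y2 y3 y4 where Y: "Y = mat2 y1 y2 y3 y4" by (metis mat2_eta)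
  from comm have "m3 = 0" "m1 = m4" using beta by (auto simp: M mat2_mult mat2_eq_iff mult.commute)
  hence M21: "M$2$1 = 0" by (simp add: M)
  have "(M$1$1) ^ (CHAR('a) ^ 1) = 1" using upper_pow[OF M21, of p] Mp p(2) by (simp add: mat2_one)
  hence "m1 = 1" using frob1[of "M$1$1" 1] p by (simp add: M)
  hence "m4 = 1" using \<open>m1 = m4\<close> by simp
  from MY have "y3 * \<beta> = 0" by (simp add: M Y mat2_mult mat2_eq_iff \<open>m3 = 0\<close> \<open>m4 = 1\<close>)
  thus ?thesis using beta by (simp add: Y)
qed
declare SL2_simps[simp del]

theorem lemma3p5:
  fixes G Q :: "('a::alg_closed_field ^ 2 ^ 2) set" and p :: nat
  assumes "Factorial_Ring.prime p" and "CHAR('a) = p"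
    and "finite G" and "subgroup G SL2"
    and "sylow_subgroup p Q G"
    and "Q \<lhd> (SL2\<lparr>carrier := G\<rparr>)"
    and "\<forall>x\<in>Q. \<forall>y\<in>Q. x \<otimes>\<^bsub>SL2\<^esub> y = y \<otimes>\<^bsub>SL2\<^esub> x"
    and "\<forall>x\<in>Q. x [^]\<^bsub>SL2\<^esub> p = \<one>\<^bsub>SL2\<^esub>"
    and "cyclic_group ((SL2\<lparr>carrier := G\<rparr>) Mod Q)"
  shows "\<exists>(n::nat) (\<zeta>::'a) V (b::'a) g.
           n > 0 \<and> \<not> p dvd n \<and> \<zeta> ^ n = 1 \<and> (\<forall>k. 0 < k \<and> k < n \<longrightarrow> \<zeta> ^ k \<noteq> 1)
         \<and> is_subspace_over (gen_subfield {\<zeta>\<^sup>2}) V \<and> finite V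
         \<and> g \<in> carrier SL2
         \<and> (\<lambda>h. g \<otimes>\<^bsub>SL2\<^esub> h \<otimes>\<^bsub>SL2\<^esub> inv\<^bsub>SL2\<^esub> g) ` G
             = generate SL2 ((\<lambda>v. mat2 1 v 0 1) ` V \<union> {mat2 \<zeta> b 0 (inverse \<zeta>)})"
proof -
  interpret G: group "SL2 :: ('a^2^2) monoid" by (rule group_SL2)
  have prime: "Factorial_Ring.prime p" and charp: "CHAR('a) = p" using assms by auto
  have subG: "subgroup G SL2" by (rule assms(4))
  have QG: "Q \<subseteq> G" and subQ: "subgroup Q SL2" using assms(5) by (auto simp: sylow_subgroup_def)
  have Gc: "G \<subseteq> carrier SL2" using subG by (rule subgroup.subset)
  have Qc: "Q \<subseteq> carrier SL2" using subQ by (rule subgroup.subset)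
  interpret N: normal Q "SL2\<lparr>carrier := G\<rparr>" by (rule assms(6))
  define F where "F = (SL2\<lparr>carrier := G\<rparr>) Mod Q"
  have grpF: "group F" unfolding F_def by (rule N.factorgroup_is_group)
  obtain Xg where Xg: "Xg \<in> carrier F"
      "carrier F = range (\<lambda>k::int. pow F Xg k)"
    using group.cyclic_group[OF grpF] assms(9) unfolding F_def by blast
  obtain x where xG: "x \<in> G" and Xgx: "Xg = Q #>\<^bsub>SL2\<lparr>carrier := G\<rparr>\<^esub> x"
    using Xg(1) by (auto simp: carrier_FactGroup F_def)
  have xc: "x \<in> carrier SL2" using xG Gc by auto
  have dec: "\<forall>h\<in>G. \<exists>q\<in>Q. \<exists>k::int. h = q \<otimes>\<^bsub>SL2\<^esub> x [^]\<^bsub>SL2\<^esub> k"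
  proof
    fix h assume hG: "h \<in> G"
    have "Q #>\<^bsub>SL2\<lparr>carrier := G\<rparr>\<^esub> h \<in> carrier F"
      using hG by (auto simp: carrier_FactGroup F_def)
    then obtain k :: int where "Q #>\<^bsub>SL2\<lparr>carrier := G\<rparr>\<^esub> h = pow F Xg k"
      using Xg(2) by auto
    also have "\<dots> = Q #>\<^bsub>SL2\<lparr>carrier := G\<rparr>\<^esub> (x [^]\<^bsub>SL2\<lparr>carrier := G\<rparr>\<^esub> k)"
      unfolding Xgx F_def by (rule N.FactGroup_int_pow) (simp add: xG)
    also have "x [^]\<^bsub>SL2\<lparr>carrier := G\<rparr>\<^esub> k = x [^]\<^bsub>SL2\<^esub> k"
      using G.int_pow_consistent[OF subG xG] by simp
    finally have eq: "Q #>\<^bsub>SL2\<lparr>carrier := G\<rparr>\<^esub> h = Q #>\<^bsub>SL2\<lparr>carrier := G\<rparr>\<^esub> (x [^]\<^bsub>SL2\<^esub> k)" .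
    have "h \<in> Q #>\<^bsub>SL2\<lparr>carrier := G\<rparr>\<^esub> h"
      by (rule N.rcos_self) (auto simp: hG N.subgroup_axioms)
    then have "h \<in> Q #>\<^bsub>SL2\<lparr>carrier := G\<rparr>\<^esub> (x [^]\<^bsub>SL2\<^esub> k)" using eq by simp
    then have "\<exists>q\<in>Q. h = q \<otimes>\<^bsub>SL2\<^esub> x [^]\<^bsub>SL2\<^esub> k" by (auto simp: r_coset_def)
    then show "\<exists>q\<in>Q. \<exists>k::int. h = q \<otimes>\<^bsub>SL2\<^esub> x [^]\<^bsub>SL2\<^esub> k" by blast
  qed
  have gex: "\<exists>g\<in>carrier SL2. \<forall>h\<in>G. (g \<otimes>\<^bsub>SL2\<^esub> h \<otimes>\<^bsub>SL2\<^esub> inv\<^bsub>SL2\<^esub> g)$2$1 = 0"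
  proof (cases "\<forall>q\<in>Q. q = \<one>\<^bsub>SL2\<^esub>")
    case True
    have "det x = 1" using xc by (simp add: SL2_simps)
    then obtain g where gc: "g \<in> carrier SL2" and gx: "(g \<otimes>\<^bsub>SL2\<^esub> x \<otimes>\<^bsub>SL2\<^esub> inv\<^bsub>SL2\<^esub> g)$2$1 = 0"
      using triang by blast
    interpret C: group_hom SL2 SL2 "\<lambda>h. g \<otimes>\<^bsub>SL2\<^esub> h \<otimes>\<^bsub>SL2\<^esub> inv\<^bsub>SL2\<^esub> g"
      by (rule G.conj_hom[OF gc])
    have cx: "g \<otimes>\<^bsub>SL2\<^esub> x \<otimes>\<^bsub>SL2\<^esub> inv\<^bsub>SL2\<^esub> g \<in> {A. det A = 1 \<and> A$2$1 = 0}"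
      using gx C.hom_closed[OF xc] by (simp add: SL2_simps)
    show ?thesis
    proof (intro bexI[OF _ gc] ballI)
      fix h assume "h \<in> G"
      then obtain q k where "q \<in> Q" "h = q \<otimes>\<^bsub>SL2\<^esub> x [^]\<^bsub>SL2\<^esub> (k::int)" using dec by blast
      hence "h = x [^]\<^bsub>SL2\<^esub> k" using True G.l_one[OF G.int_pow_closed[OF xc]] by simp
      hence "g \<otimes>\<^bsub>SL2\<^esub> h \<otimes>\<^bsub>SL2\<^esub> inv\<^bsub>SL2\<^esub> g = (g \<otimes>\<^bsub>SL2\<^esub> x \<otimes>\<^bsub>SL2\<^esub> inv\<^bsub>SL2\<^esub> g) [^]\<^bsub>SL2\<^esub> k"
        using C.hom_int_pow[OF xc] by simp
      also have "\<dots> \<in> {A. det A = 1 \<and> A$2$1 = 0}"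
        by (rule G.subgroup_int_pow_closed[OF upper_subgroup cx])
      finally show "(g \<otimes>\<^bsub>SL2\<^esub> h \<otimes>\<^bsub>SL2\<^esub> inv\<^bsub>SL2\<^esub> g)$2$1 = 0" by simp
    qed
  next
    case False
    then obtain q0 where q0Q: "q0 \<in> Q" and q01: "q0 \<noteq> \<one>\<^bsub>SL2\<^esub>" by blast
    have q0c: "q0 \<in> carrier SL2" using q0Q Qc by auto
    have "det q0 = 1" using q0c by (simp add: SL2_simps)
    then obtain g where gc: "g \<in> carrier SL2" and gq: "(g \<otimes>\<^bsub>SL2\<^esub> q0 \<otimes>\<^bsub>SL2\<^esub> inv\<^bsub>SL2\<^esub> g)$2$1 = 0"
      using triang by blast
    interpret C: group_hom SL2 SL2 "\<lambda>h. g \<otimes>\<^bsub>SL2\<^esub> h \<otimes>\<^bsub>SL2\<^esub> inv\<^bsub>SL2\<^esub> g"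
      by (rule G.conj_hom[OF gc])
    define U where "U = g \<otimes>\<^bsub>SL2\<^esub> q0 \<otimes>\<^bsub>SL2\<^esub> inv\<^bsub>SL2\<^esub> g"
    have Uc: "U \<in> carrier SL2" unfolding U_def using C.hom_closed[OF q0c] by simp
    have "U [^]\<^bsub>SL2\<^esub> p = g \<otimes>\<^bsub>SL2\<^esub> (q0 [^]\<^bsub>SL2\<^esub> p) \<otimes>\<^bsub>SL2\<^esub> inv\<^bsub>SL2\<^esub> g"
      unfolding U_def using C.hom_nat_pow[OF q0c] by simp
    also have "\<dots> = \<one>\<^bsub>SL2\<^esub>" using assms(8) q0Q gc by simp
    finally have Up: "U [^]\<^bsub>SL2\<^esub> p = \<one>\<^bsub>SL2\<^esub>" .
    have U21: "U$2$1 = 0" using gq by (simp add: U_def)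
    have "(U$1$1) ^ (CHAR('a) ^ 1) = 1" using upper_pow[OF U21, of p] Up charp
      by (simp add: SL2_simps mat2_one)
    hence U11: "U$1$1 = 1" using frob1[of "U$1$1" 1] prime charp by simp
    have "det U = 1" using Uc by (simp add: SL2_simps)
    hence U22: "U$2$2 = 1" using U11 U21 by (simp add: det_2)
    define \<beta> where "\<beta> = U$1$2"
    have Ueq: "U = mat2 1 \<beta> 0 1" by (rule trans[OF mat2_eta]) (simp add: U11 U21 U22 \<beta>_def)
    have "U \<noteq> \<one>\<^bsub>SL2\<^esub>" unfolding U_def using G.conj_one_iff[OF gc q0c] q01 by simp
    hence \<beta>0: "\<beta> \<noteq> 0" using Ueq by (auto simp: SL2_simps mat2_one)
    show ?thesis
    proof (intro bexI[OF _ gc] ballI)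
      fix h assume hG: "h \<in> G"
      have hc: "h \<in> carrier SL2" using hG Gc by auto
      define r where "r = h \<otimes>\<^bsub>SL2\<^esub> q0 \<otimes>\<^bsub>SL2\<^esub> inv\<^bsub>SL2\<^esub> h"
      have "h \<otimes>\<^bsub>SL2\<lparr>carrier := G\<rparr>\<^esub> q0 \<otimes>\<^bsub>SL2\<lparr>carrier := G\<rparr>\<^esub> inv\<^bsub>SL2\<lparr>carrier := G\<rparr>\<^esub> h \<in> Q"
        by (rule N.inv_op_closed2) (auto simp: hG q0Q)
      hence rQ: "r \<in> Q" unfolding r_def using G.m_inv_consistent[OF subG hG] by simp
      have rc: "r \<in> carrier SL2" using rQ Qc by auto
      define M where "M = g \<otimes>\<^bsub>SL2\<^esub> r \<otimes>\<^bsub>SL2\<^esub> inv\<^bsub>SL2\<^esub> g"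
      have "r \<otimes>\<^bsub>SL2\<^esub> q0 = q0 \<otimes>\<^bsub>SL2\<^esub> r" using assms(7) rQ q0Q by blast
      hence comm: "M \<otimes>\<^bsub>SL2\<^esub> U = U \<otimes>\<^bsub>SL2\<^esub> M"
        unfolding M_def U_def using C.hom_mult[OF rc q0c] C.hom_mult[OF q0c rc] by simp
      have "M [^]\<^bsub>SL2\<^esub> p = g \<otimes>\<^bsub>SL2\<^esub> (r [^]\<^bsub>SL2\<^esub> p) \<otimes>\<^bsub>SL2\<^esub> inv\<^bsub>SL2\<^esub> g"
        unfolding M_def using C.hom_nat_pow[OF rc] by simp
      also have "\<dots> = \<one>\<^bsub>SL2\<^esub>" using assms(8) rQ gc by simp
      finally have Mp: "M [^]\<^bsub>SL2\<^esub> p = \<one>\<^bsub>SL2\<^esub>" .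
      have "r \<otimes>\<^bsub>SL2\<^esub> h = h \<otimes>\<^bsub>SL2\<^esub> q0" unfolding r_def by (rule G.conj_comm[OF hc q0c])
      hence MY: "M \<otimes>\<^bsub>SL2\<^esub> (g \<otimes>\<^bsub>SL2\<^esub> h \<otimes>\<^bsub>SL2\<^esub> inv\<^bsub>SL2\<^esub> g) = (g \<otimes>\<^bsub>SL2\<^esub> h \<otimes>\<^bsub>SL2\<^esub> inv\<^bsub>SL2\<^esub> g) \<otimes>\<^bsub>SL2\<^esub> U"
        unfolding M_def U_def using C.hom_mult[OF rc hc] C.hom_mult[OF hc q0c] by simp
      show "(g \<otimes>\<^bsub>SL2\<^esub> h \<otimes>\<^bsub>SL2\<^esub> inv\<^bsub>SL2\<^esub> g)$2$1 = 0"
        using key_matrix[OF prime charp \<beta>0, of M "g \<otimes>\<^bsub>SL2\<^esub> h \<otimes>\<^bsub>SL2\<^esub> inv\<^bsub>SL2\<^esub> g"] comm Mp MY Ueq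
        by (simp add: SL2_simps)
    qed
  qed
  then obtain g where gc: "g \<in> carrier SL2"
    and gup: "\<forall>h\<in>G. (g \<otimes>\<^bsub>SL2\<^esub> h \<otimes>\<^bsub>SL2\<^esub> inv\<^bsub>SL2\<^esub> g)$2$1 = 0" by blast
  interpret C: group_hom SL2 SL2 "\<lambda>h. g \<otimes>\<^bsub>SL2\<^esub> h \<otimes>\<^bsub>SL2\<^esub> inv\<^bsub>SL2\<^esub> g"
    by (rule G.conj_hom[OF gc])
  define c where "c = (\<lambda>h. g \<otimes>\<^bsub>SL2\<^esub> h \<otimes>\<^bsub>SL2\<^esub> inv\<^bsub>SL2\<^esub> g)"
  have "\<exists>(n::nat) (\<zeta>::'a) V (b::'a). n > 0 \<and> \<not> p dvd n \<and> \<zeta> ^ n = 1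
     \<and> (\<forall>k. 0 < k \<and> k < n \<longrightarrow> \<zeta> ^ k \<noteq> 1)
     \<and> is_subspace_over (gen_subfield {\<zeta>\<^sup>2}) V \<and> finite V
     \<and> c ` G = generate SL2 ((\<lambda>v. mat2 1 v 0 1) ` V \<union> {mat2 \<zeta> b 0 (inverse \<zeta>)})"
  proof (rule partB[OF prime charp, where P = "c ` Q" and x = "c x"])
    show "finite (c ` G)" using assms(3) by simp
    show "subgroup (c ` G) SL2" unfolding c_def by (rule C.subgroup_img_is_subgroup[OF subG])
    show "\<forall>h\<in>c ` G. h$2$1 = 0" using gup by (auto simp: c_def)
    show "c x \<in> c ` G" using xG by auto
    show "c ` Q \<subseteq> c ` G" using QG by auto
    show "\<forall>q\<in>c ` Q. q [^]\<^bsub>SL2\<^esub> p = \<one>\<^bsub>SL2\<^esub>"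
    proof
      fix q' assume "q' \<in> c ` Q"
      then obtain q where q: "q \<in> Q" "q' = c q" by auto
      have qc: "q \<in> carrier SL2" using q Qc by auto
      have "q' [^]\<^bsub>SL2\<^esub> p = c (q [^]\<^bsub>SL2\<^esub> p)" unfolding q c_def using C.hom_nat_pow[OF qc] by simp
      also have "\<dots> = \<one>\<^bsub>SL2\<^esub>" using assms(8) q gc by (simp add: c_def)
      finally show "q' [^]\<^bsub>SL2\<^esub> p = \<one>\<^bsub>SL2\<^esub>" .
    qed
    show "\<forall>h\<in>c ` G. \<exists>q\<in>c ` Q. \<exists>k::int. h = q \<otimes>\<^bsub>SL2\<^esub> c x [^]\<^bsub>SL2\<^esub> k"
    proof
      fix h' assume "h' \<in> c ` G"
      then obtain h where h: "h \<in> G" "h' = c h" by auto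
      then obtain q k where q: "q \<in> Q" "h = q \<otimes>\<^bsub>SL2\<^esub> x [^]\<^bsub>SL2\<^esub> (k::int)" using dec by blast
      have qc: "q \<in> carrier SL2" using q Qc by auto
      have "h' = c q \<otimes>\<^bsub>SL2\<^esub> c (x [^]\<^bsub>SL2\<^esub> k)"
        unfolding h q c_def using C.hom_mult[OF qc G.int_pow_closed[OF xc]] by simp
      also have "c (x [^]\<^bsub>SL2\<^esub> k) = c x [^]\<^bsub>SL2\<^esub> k" unfolding c_def using C.hom_int_pow[OF xc] by simp
      finally show "\<exists>q\<in>c ` Q. \<exists>k::int. h' = q \<otimes>\<^bsub>SL2\<^esub> c x [^]\<^bsub>SL2\<^esub> k" using q(1) by blast
    qed
  qed
  then show ?thesis using gc unfolding c_def by blast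
qed

end
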